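(* Let $X$ be a nonnegative absolutely continuous random variable with pdf $f$ satisfying $$e^{-\alpha x-\beta}\le f(x)\le 1\qquad\text{for all }x\ge0,$$ where $\alpha>0$ and $\beta\ge0$. Let $\overline F(t)=\mathbb P(X>t)$, $\Lambda(t)=-\log\overline F(t)$, $\delta(t)=\mathbb E[X\mid X>t]$, and for $t\ge0$ let $X_t=[X-t\mid X>t]$ be the residual lifetime with pdf $f_t(x)=f(x+t)/\overline F(t)$, $x>0$. Define the residual entropy $$H(X_t)=-\int_t^\infty\frac{f(x)}{\overline F(t)}\log\frac{f(x)}{\overline F(t)}\,\mathrm dx,$$ the weighted residual entropy $$H^w(X_t)=-\int_t^\infty x\,\frac{f(x)}{\overline F(t)}\log\frac{f(x)}{\overline F(t)}\,\mathrm dx,$$ and the residual varentropy $V(X_t)=\int_t^\infty\frac{f(x)}{\overline F(t)}\big(\log\frac{f(x)}{\overline F(t)}\big)^2\mathrm dx-[H(X_t)]^2$. Then for all $t\ge0$, $$V(X_t)\le\alpha\big[\Lambda(t)\delta(t)+H^w(X_t)\big]+\beta\big[\Lambda(t)+H(X_t)\big]-\big[\Lambda(t)+H(X_t)\big]^2.$$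
   Context: $[X\mid B]$ denotes a random variable distributed as $X$ conditional on the event $B$. The convention $0\log0=0$ is used. *)

theory Defs
  imports "HOL-Analysis.Analysis"
begin

text \<open>All quantities are expressed through the pdf f of the nonnegative
absolutely continuous random variable X (integrals w.r.t. Lebesgue measure).\<close>

definition surv :: "(real \<Rightarrow> real) \<Rightarrow> real \<Rightarrow> real" where
  "surv f t = (LINT x:{t<..}|lborel. f x)"

definition cumhaz :: "(real \<Rightarrow> real) \<Rightarrow> real \<Rightarrow> real" where
  "cumhaz f t = - ln (surv f t)"

definition cond_mean :: "(real \<Rightarrow> real) \<Rightarrow> real \<Rightarrow> real" where
  "cond_mean f t = (LINT x:{t<..}|lborel. x * f x) / surv f t"

definition res_entropy :: "(real \<Rightarrow> real) \<Rightarrow> real \<Rightarrow> real" where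
  "res_entropy f t =
     - (LINT x:{t<..}|lborel. (f x / surv f t) * ln (f x / surv f t))"

definition w_res_entropy :: "(real \<Rightarrow> real) \<Rightarrow> real \<Rightarrow> real" where
  "w_res_entropy f t =
     - (LINT x:{t<..}|lborel. x * (f x / surv f t) * ln (f x / surv f t))"

definition res_varentropy :: "(real \<Rightarrow> real) \<Rightarrow> real \<Rightarrow> real" where
  "res_varentropy f t =
     (LINT x:{t<..}|lborel. (f x / surv f t) * (ln (f x / surv f t))\<^sup>2)
       - (res_entropy f t)\<^sup>2"

end

theory Submission
  imports Defs
begin

lemma surv_pos:
  fixes f :: "real \<Rightarrow> real" and t :: real
  assumes meas: "f \<in> borel_measurable lborel"
    and intf: "set_integrable lborel {t<..} f"
    and pos: "\<And>x. x > t \<Longrightarrow> f x > 0"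
  shows "surv f t > 0"
proof -
  have nn: "surv f t \<ge> 0" unfolding surv_def
    unfolding set_lebesgue_integral_def
    by (rule Bochner_Integration.integral_nonneg) (use pos in \<open>auto simp: indicator_def less_imp_le\<close>)
  have "surv f t \<noteq> 0"
  proof
    assume "surv f t = 0"
    hence "integral\<^sup>L lborel (\<lambda>x. indicator {t<..} x *\<^sub>R f x) = 0"
      unfolding surv_def set_lebesgue_integral_def .
    hence "AE x in lborel. indicator {t<..} x *\<^sub>R f x = 0"
      using integral_nonneg_eq_0_iff_AE[of lborel "\<lambda>x. indicator {t<..} x *\<^sub>R f x"] intf pos
      unfolding set_integrable_def
      by (auto simp: indicator_def less_imp_le)
    hence "AE x in lborel. x \<notin> {t<..<t+1}"
      by eventually_elim (use pos in \<open>fastforce simp: indicator_def\<close>)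
    hence "emeasure lborel {t<..<t+1} = 0"
      by (subst (asm) AE_iff_measurable[of "{t<..<t+1}"]) auto
    thus False by simp
  qed
  with nn show ?thesis by simp
qed

theorem theorem3p9:
  fixes f :: "real \<Rightarrow> real" and \<alpha> \<beta> t :: real
  assumes meas: "f \<in> borel_measurable lborel"
    and zero_neg: "\<And>x. x < 0 \<Longrightarrow> f x = 0"
    and int_f: "set_integrable lborel {0..} f"
    and total: "(LINT x:{0..}|lborel. f x) = 1"
    and bounds: "\<And>x. x \<ge> 0 \<Longrightarrow> exp (- \<alpha> * x - \<beta>) \<le> f x \<and> f x \<le> 1"
    and alpha: "\<alpha> > 0" and beta: "\<beta> \<ge> 0"
    and int_mean: "set_integrable lborel {0..} (\<lambda>x. x * f x)"
    and int_ent: "set_integrable lborel {0..} (\<lambda>x. f x * ln (f x))"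
    and int_went: "set_integrable lborel {0..} (\<lambda>x. x * f x * ln (f x))"
    and int_var: "set_integrable lborel {0..} (\<lambda>x. f x * (ln (f x))\<^sup>2)"
    and t: "t \<ge> 0"
  shows "res_varentropy f t
     \<le> \<alpha> * (cumhaz f t * cond_mean f t + w_res_entropy f t)
       + \<beta> * (cumhaz f t + res_entropy f t)
       - (cumhaz f t + res_entropy f t)\<^sup>2"
proof -
  define A where "A = {t<..}"
  have Asub: "A \<subseteq> {0..}" using t by (auto simp: A_def)
  have Asets: "A \<in> sets lborel" by (simp add: A_def)
  have i1: "set_integrable lborel A f" by (rule set_integrable_subset[OF int_f Asets Asub])
  have i2: "set_integrable lborel A (\<lambda>x. x * f x)" by (rule set_integrable_subset[OF int_mean Asets Asub])
  have i3: "set_integrable lborel A (\<lambda>x. f x * ln (f x))" by (rule set_integrable_subset[OF int_ent Asets Asub])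
  have i4: "set_integrable lborel A (\<lambda>x. x * f x * ln (f x))" by (rule set_integrable_subset[OF int_went Asets Asub])
  have i5: "set_integrable lborel A (\<lambda>x. f x * (ln (f x))\<^sup>2)" by (rule set_integrable_subset[OF int_var Asets Asub])
  have fpos: "f x > 0" if "x \<in> A" for x
  proof -
    have "x \<ge> 0" using that Asub by auto
    from bounds[OF this] show ?thesis by (meson exp_gt_zero less_le_trans)
  qed
  define S where "S = surv f t"
  have Spos: "S > 0" unfolding S_def
    by (rule surv_pos[OF meas]) (use i1 fpos in \<open>auto simp: A_def\<close>)
  have SA: "S = (LINT x:A|lborel. f x)" by (simp add: S_def surv_def A_def)
  define IX where "IX = (LINT x:A|lborel. x * f x)"
  define IL where "IL = (LINT x:A|lborel. f x * ln (f x))"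
  define IXL where "IXL = (LINT x:A|lborel. x * f x * ln (f x))"
  define IV where "IV = (LINT x:A|lborel. f x * (ln (f x))\<^sup>2)"
  let ?L = "ln S"
  have H: "res_entropy f t = - (IL / S - ?L)"
  proof -
    have "(LINT x:A|lborel. (f x / S) * ln (f x / S))
        = (LINT x:A|lborel. (f x * ln (f x)) / S - ?L / S * f x)"
      using fpos Spos by (intro set_lebesgue_integral_cong[OF Asets])
        (auto simp: ln_div field_simps)
    also have "\<dots> = IL / S - ?L / S * S"
      using i1 i3 by (simp add: IL_def SA set_integral_diff)
    also have "\<dots> = IL / S - ?L" using Spos by simp
    finally show ?thesis unfolding res_entropy_def S_def A_def by simp
  qed
  have HW: "w_res_entropy f t = - (IXL / S - ?L * IX / S)"
  proof -
    have "(LINT x:A|lborel. x * (f x / S) * ln (f x / S))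
        = (LINT x:A|lborel. (x * f x * ln (f x)) / S - ?L / S * (x * f x))"
      using fpos Spos by (intro set_lebesgue_integral_cong[OF Asets])
        (auto simp: ln_div field_simps)
    also have "\<dots> = IXL / S - ?L / S * IX"
      using i2 i4 by (simp add: IXL_def IX_def set_integral_diff)
    finally show ?thesis unfolding w_res_entropy_def S_def A_def by simp
  qed
  have CM: "cond_mean f t = IX / S" by (simp add: cond_mean_def IX_def S_def A_def)
  have CH: "cumhaz f t = - ?L" by (simp add: cumhaz_def S_def)
  have V: "res_varentropy f t = IV / S - 2 * ?L * IL / S + ?L\<^sup>2 - (res_entropy f t)\<^sup>2"
  proof -
    have "(LINT x:A|lborel. (f x / S) * (ln (f x / S))\<^sup>2)
        = (LINT x:A|lborel. (f x * (ln (f x))\<^sup>2) / S - (2 * ?L / S) * (f x * ln (f x)) + (?L\<^sup>2 / S) * f x)"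
      using fpos Spos by (intro set_lebesgue_integral_cong[OF Asets])
        (auto simp: ln_div field_simps power2_eq_square)
    also have "\<dots> = IV / S - (2 * ?L / S) * IL + (?L\<^sup>2 / S) * S"
      using i1 i3 i5 by (simp add: IV_def IL_def SA set_integral_diff set_integral_add)
    also have "\<dots> = IV / S - 2 * ?L * IL / S + ?L\<^sup>2" using Spos by simp
    finally show ?thesis unfolding res_varentropy_def S_def A_def by simp
  qed
  have key: "IV \<le> - \<alpha> * IXL - \<beta> * IL"
  proof -
    have "IV \<le> (LINT x:A|lborel. - \<alpha> * (x * f x * ln (f x)) - \<beta> * (f x * ln (f x)))"
      unfolding IV_def
    proof (rule set_integral_mono[OF i5])
      show "set_integrable lborel A (\<lambda>x. - \<alpha> * (x * f x * ln (f x)) - \<beta> * (f x * ln (f x)))"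
        using i3 i4 by (intro set_integral_diff set_integrable_mult_right)
      fix x assume xA: "x \<in> A"
      have x0: "x \<ge> 0" using xA Asub by auto
      have fp: "f x > 0" using fpos xA .
      have l1: "ln (f x) \<le> 0" using bounds[OF x0] fp by simp
      have l2: "- \<alpha> * x - \<beta> \<le> ln (f x)"
        using bounds[OF x0] fp by (metis ln_exp ln_le_cancel_iff exp_gt_zero)
      have "f x * ln (f x) \<le> 0" using fp l1 by (simp add: mult_le_0_iff)
      hence "(f x * ln (f x)) * (ln (f x)) \<le> (f x * ln (f x)) * (- \<alpha> * x - \<beta>)"
        by (rule mult_left_mono_neg[OF l2])
      thus "f x * (ln (f x))\<^sup>2 \<le> - \<alpha> * (x * f x * ln (f x)) - \<beta> * (f x * ln (f x))"
        by (simp add: power2_eq_square algebra_simps)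
    qed
    also have "\<dots> = - \<alpha> * IXL - \<beta> * IL"
      unfolding IXL_def IL_def set_integral_mult_right[symmetric]
      by (intro set_integral_diff(2) set_integrable_mult_right i3 i4)
    finally show ?thesis .
  qed
  have "res_varentropy f t = IV / S - (IL / S)\<^sup>2"
    using Spos unfolding V H by (simp add: power2_eq_square field_simps)
  also have "\<dots> \<le> (- \<alpha> * IXL - \<beta> * IL) / S - (IL / S)\<^sup>2"
    using key Spos by (simp add: divide_right_mono)
  also have "\<dots> = \<alpha> * (cumhaz f t * cond_mean f t + w_res_entropy f t)
       + \<beta> * (cumhaz f t + res_entropy f t)
       - (cumhaz f t + res_entropy f t)\<^sup>2"
    unfolding CH CM HW H using Spos by (simp add: field_simps power2_eq_square)
  finally show ?thesis .
qed

end
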